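(* Let $G$ be a topological group which is a Baire space. Then the following are equivalent: (i) $G$ is metrizable; (ii) $G$ has the strong Pytkeev property; (iii) $G$ has countable $ck$-character; (iv) $G$ has countable $cn$-character; (v) $G$ has a $\mathfrak{G}$-base satisfying the condition $(\mathbf{D})$.
   Context: A space $X$ has the strong Pytkeev property if for each $x\in X$ there is a countable family $\mathcal{D}$ of subsets of $X$ such that for each neighborhood $U$ of $x$ and each $A\subseteq X$ with $x\in\overline{A}\setminus A$ there is $D\in\mathcal{D}$ with $D\subseteq U$ and $D\cap A$ infinite. For $x\in X$, a family $\mathcal{N}$ of subsets of $X$ is a $cn$-network at $x$ if for each neighborhood $O_x$ of $x$ the set $\bigcup\{N\in\mathcal{N}:x\in N\subseteq O_x\}$ is a neighborhood of $x$; it is a $ck$-network at $x$ if for every neighborhood $O_x$ there is a neighborhood $U_x$ of $x$ such that for each compact $K\subseteq U_x$ there is a finite $\mathcal{F}\subseteq\mathcal{N}$ with $x\in\bigcap\mathcal{F}$ and $K\subseteq\bigcup\mathcal{F}\subseteq O_x$. The $cn$-character (resp. $ck$-character) of $X$ is the supremum over $x\in X$ of the least cardinality of a $cn$-network (resp. $ck$-network) at $x$. $\mathbb{N}^\mathbb{N}$ is ordered coordinatewise. A $\mathfrak{G}$-base of a topological group $G$ is a base $\{U_\alpha:\alpha\in\mathbb{N}^\mathbb{N}\}$ of neighborhoods of the unit $e$ with $U_\beta\subseteq U_\alpha$ whenever $\alpha\le\beta$. For $\alpha\in\mathbb{N}^\mathbb{N}$, $k\in\mathbb{N}$, let $I_k(\alpha)=\{\beta:\beta_i=\alpha_i,\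 i=1,\dots,k\}$ and $D_k(\alpha)=\bigcap_{\beta\in I_k(\alpha)}U_\beta$; the base satisfies condition $(\mathbf{D})$ if $U_\alpha=\bigcup_k D_k(\alpha)$ for every $\alpha$. *)

theory Defs
  imports "HOL-Analysis.Analysis"
begin

definition nhd_of :: "'a::topological_space \<Rightarrow> 'a set \<Rightarrow> bool" where
  "nhd_of x S \<longleftrightarrow> (\<exists>V. open V \<and> x \<in> V \<and> V \<subseteq> S)"

definition Baire_space :: "'a::topological_space itself \<Rightarrow> bool" where
  "Baire_space _ \<longleftrightarrow>
     (\<forall>\<G> :: 'a set set. countable \<G> \<and> (\<forall>G\<in>\<G>. open G \<and> closure G = UNIV)
        \<longrightarrow> closure (\<Inter>\<G>) = UNIV)"

definition strong_Pytkeev :: "'a::topological_space itself \<Rightarrow> bool" where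
  "strong_Pytkeev _ \<longleftrightarrow>
     (\<forall>x::'a. \<exists>\<D> :: 'a set set. countable \<D> \<and>
        (\<forall>U A. nhd_of x U \<and> x \<in> closure A - A \<longrightarrow>
           (\<exists>D\<in>\<D>. D \<subseteq> U \<and> infinite (D \<inter> A))))"

definition cn_network_at :: "'a::topological_space \<Rightarrow> 'a set set \<Rightarrow> bool" where
  "cn_network_at x \<N> \<longleftrightarrow>
     (\<forall>W. nhd_of x W \<longrightarrow> nhd_of x (\<Union>{N\<in>\<N>. x \<in> N \<and> N \<subseteq> W}))"

definition ck_network_at :: "'a::topological_space \<Rightarrow> 'a set set \<Rightarrow> bool" where
  "ck_network_at x \<N> \<longleftrightarrow>
     (\<forall>W. nhd_of x W \<longrightarrow> (\<exists>U. nhd_of x U \<and>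
        (\<forall>K. compact K \<and> K \<subseteq> U \<longrightarrow>
           (\<exists>\<F>. finite \<F> \<and> \<F> \<subseteq> \<N> \<and> x \<in> \<Inter>\<F> \<and> K \<subseteq> \<Union>\<F> \<and> \<Union>\<F> \<subseteq> W))))"

definition countable_cn_character :: "'a::topological_space itself \<Rightarrow> bool" where
  "countable_cn_character _ \<longleftrightarrow> (\<forall>x::'a. \<exists>\<N>. countable \<N> \<and> cn_network_at x \<N>)"

definition countable_ck_character :: "'a::topological_space itself \<Rightarrow> bool" where
  "countable_ck_character _ \<longleftrightarrow> (\<forall>x::'a. \<exists>\<N>. countable \<N> \<and> ck_network_at x \<N>)"

text \<open>G-base (indexed by N^N with the pointwise order; coordinates indexed from 0)
  of neighborhoods of the unit 0 of an (additively written) topological group.\<close>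
definition G_base :: "((nat \<Rightarrow> nat) \<Rightarrow> 'a::topological_group_add set) \<Rightarrow> bool" where
  "G_base U \<longleftrightarrow>
     (\<forall>\<alpha>. nhd_of 0 (U \<alpha>)) \<and>
     (\<forall>V. nhd_of 0 V \<longrightarrow> (\<exists>\<alpha>. U \<alpha> \<subseteq> V)) \<and>
     (\<forall>\<alpha> \<beta>. \<alpha> \<le> \<beta> \<longrightarrow> U \<beta> \<subseteq> U \<alpha>)"

definition I_k :: "nat \<Rightarrow> (nat \<Rightarrow> nat) \<Rightarrow> (nat \<Rightarrow> nat) set" where
  "I_k k \<alpha> = {\<beta>. \<forall>i<k. \<beta> i = \<alpha> i}"

definition D_k :: "((nat \<Rightarrow> nat) \<Rightarrow> 'a set) \<Rightarrow> nat \<Rightarrow> (nat \<Rightarrow> nat) \<Rightarrow> 'a set" where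
  "D_k U k \<alpha> = (\<Inter>\<beta>\<in>I_k k \<alpha>. U \<beta>)"

definition condition_D :: "((nat \<Rightarrow> nat) \<Rightarrow> 'a set) \<Rightarrow> bool" where
  "condition_D U \<longleftrightarrow> (\<forall>\<alpha>. U \<alpha> = (\<Union>k. D_k U k \<alpha>))"

end

theory Submission
  imports Defs
begin

lemma ltrans_eq:
  fixes a :: "'a::group_add"
  shows "(+) a ` S = (\<lambda>x. -a + x) -` S"
proof (rule set_eqI)
  fix x
  show "x \<in> (+) a ` S \<longleftrightarrow> x \<in> (\<lambda>x. -a + x) -` S"
  proof
    assume "x \<in> (+) a ` S"
    then obtain s where "s \<in> S" "x = a + s" by auto
    then show "x \<in> (\<lambda>x. -a + x) -` S" by (simp add: add.assoc[symmetric])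
  next
    assume "x \<in> (\<lambda>x. -a + x) -` S"
    then have "-a + x \<in> S" by simp
    moreover have "x = a + (-a + x)" by (simp add: add.assoc[symmetric])
    ultimately show "x \<in> (+) a ` S" by blast
  qed
qed

lemma open_ltrans:
  fixes S :: "'a::topological_group_add set"
  assumes "open S" shows "open ((+) a ` S)"
proof -
  have "continuous_on UNIV (\<lambda>x::'a. -a + x)" by (intro continuous_intros)
  then show ?thesis using open_vimage[OF assms] ltrans_eq by metis
qed

lemma open_neg:
  fixes S :: "'a::topological_group_add set"
  assumes "open S" shows "open (uminus ` S)"
proof -
  have "uminus ` S = uminus -` S"
    by (auto simp: image_iff) (metis minus_minus)
  moreover have "continuous_on UNIV (\<lambda>x::'a. -x)" by (intro continuous_intros)
  ultimately show ?thesis using open_vimage[OF assms] by metis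
qed

lemma nhds0_pair:
  fixes W :: "'a::topological_group_add set"
  assumes "open W" "0 \<in> W"
  shows "\<exists>V. open V \<and> 0 \<in> V \<and> (\<forall>x\<in>V. \<forall>y\<in>V. x + y \<in> W)"
proof -
  have "eventually (\<lambda>p. fst p + snd p \<in> W) (nhds (0::'a) \<times>\<^sub>F nhds 0)"
    using topological_tendstoD[OF tendsto_add_Pair[of "0::'a" 0]] assms by simp
  then obtain Q where Q1: "eventually Q (nhds (0::'a))"
      and Q2: "\<forall>x y. Q x \<longrightarrow> Q y \<longrightarrow> fst (x, y) + snd (x, y) \<in> W"
    unfolding eventually_prod_same by blast
  then obtain V where V: "open V" "0 \<in> V" "\<forall>x\<in>V. Q x" unfolding eventually_nhds by blast
  have "\<forall>x\<in>V. \<forall>y\<in>V. x + y \<in> W"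
  proof (intro ballI)
    fix x y assume "x \<in> V" "y \<in> V"
    then have "Q x" "Q y" using V by auto
    then have "fst (x, y) + snd (x, y) \<in> W" using Q2 by blast
    then show "x + y \<in> W" by simp
  qed
  then show ?thesis using V by blast
qed

lemma nhds0_triple:
  fixes W :: "'a::topological_group_add set"
  assumes "open W" "0 \<in> W"
  shows "\<exists>V. open V \<and> 0 \<in> V \<and> (\<forall>x. x \<in> V \<longleftrightarrow> -x \<in> V) \<and>
              (\<forall>x\<in>V. \<forall>y\<in>V. \<forall>z\<in>V. x + y + z \<in> W)"
proof -
  obtain V1 where V1: "open V1" "0 \<in> V1" "\<forall>x\<in>V1. \<forall>y\<in>V1. x + y \<in> W"
    using nhds0_pair[OF assms] by blast
  obtain V2 where V2: "open V2" "0 \<in> V2" "\<forall>x\<in>V2. \<forall>y\<in>V2. x + y \<in> V1"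
    using nhds0_pair[OF V1(1,2)] by blast
  define V where "V = V2 \<inter> uminus ` V2"
  have "open V" unfolding V_def using V2(1) open_neg by blast
  moreover have "0 \<in> V" unfolding V_def using V2(2) by force
  moreover have "\<forall>x. x \<in> V \<longleftrightarrow> -x \<in> V"
    unfolding V_def by (auto simp: image_iff) (metis minus_minus)+
  moreover have "\<forall>x\<in>V. \<forall>y\<in>V. \<forall>z\<in>V. x + y + z \<in> W"
  proof (intro ballI)
    fix x y z assume "x \<in> V" "y \<in> V" "z \<in> V"
    then have "x \<in> V2" "y \<in> V2" "z \<in> V2" unfolding V_def by auto
    then have xy: "x + y \<in> V1" using V2 by blast
    have "z + 0 \<in> V1" using V2 \<open>z \<in> V2\<close> by blast
    then have "z \<in> V1" by simp
    then show "x + y + z \<in> W" using V1(3) xy by blast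
  qed
  ultimately show ?thesis by blast
qed

lemma nhds0_quad:
  fixes W :: "'a::topological_group_add set"
  assumes "open W" "0 \<in> W"
  shows "\<exists>V. open V \<and> 0 \<in> V \<and> (\<forall>x. x \<in> V \<longleftrightarrow> -x \<in> V) \<and>
              (\<forall>a\<in>V. \<forall>b\<in>V. \<forall>c\<in>V. \<forall>d\<in>V. a + b + c + d \<in> W)"
proof -
  obtain V1 where V1: "open V1" "0 \<in> V1" "\<forall>x\<in>V1. \<forall>y\<in>V1. \<forall>z\<in>V1. x + y + z \<in> W"
    using nhds0_triple[OF assms] by blast
  obtain V2 where V2: "open V2" "0 \<in> V2" "\<forall>x. x \<in> V2 \<longleftrightarrow> -x \<in> V2"
     "\<forall>x\<in>V2. \<forall>y\<in>V2. \<forall>z\<in>V2. x + y + z \<in> V1"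
    using nhds0_triple[OF V1(1,2)] by blast
  have "\<forall>a\<in>V2. \<forall>b\<in>V2. \<forall>c\<in>V2. \<forall>d\<in>V2. a + b + c + d \<in> W"
  proof (intro ballI)
    fix a b c d assume "a \<in> V2" "b \<in> V2" "c \<in> V2" "d \<in> V2"
    then have abc: "a + b + c \<in> V1" using V2 by blast
    have "d + 0 + 0 \<in> V1" using V2(2,4) \<open>d \<in> V2\<close> by blast
    then have d1: "d \<in> V1" by simp
    have "a + b + c + d + 0 \<in> W" using V1(2,3) abc d1 by blast
    then show "a + b + c + d \<in> W" by simp
  qed
  then show ?thesis using V2 by blast
qed

lemma closure_sub_sum:
  fixes V :: "'a::topological_group_add set"
  assumes "open V" "0 \<in> V" "x \<in> closure V"
  shows "\<exists>a\<in>V. \<exists>b\<in>V. x = a + b"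
proof -
  define T where "T = (+) x ` (uminus ` V)"
  have "open T" unfolding T_def using assms open_neg open_ltrans by blast
  moreover have "x \<in> T" unfolding T_def using assms(2) by force
  ultimately have "T \<inter> V \<noteq> {}" using open_Int_closure_eq_empty[of T V] assms(3) by blast
  then obtain w where w: "w \<in> T" "w \<in> V" by blast
  then obtain v where v: "v \<in> V" "w = x + - v" unfolding T_def by blast
  then have "x = w + v" by (simp add: add.assoc)
  then show ?thesis using w v by blast
qed

lemma nhd_ofI: "open V \<Longrightarrow> x \<in> V \<Longrightarrow> nhd_of x V"
  unfolding nhd_of_def by blast

definition fc0 :: "'a::{topological_space,zero} itself \<Rightarrow> bool" where
  "fc0 _ \<longleftrightarrow> (\<exists>B::'a set set. countable B \<and> (\<forall>b\<in>B. open b \<and> 0 \<in> b) \<and>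
                   (\<forall>W. nhd_of 0 W \<longrightarrow> (\<exists>b\<in>B. b \<subseteq> W)))"

lemma key_fc0:
  fixes C :: "'a::topological_group_add set set"
  assumes "countable C"
    and H: "\<And>W. nhd_of 0 W \<Longrightarrow> \<exists>c\<in>C. c \<subseteq> W \<and> interior (closure c) \<noteq> {}"
  shows "fc0 TYPE('a)"
proof -
  define p where "p c = (SOME q. q \<in> interior (closure c))" for c :: "'a set"
  have p: "p c \<in> interior (closure c)" if "interior (closure c) \<noteq> {}" for c
    unfolding p_def using that some_in_eq by blast
  define B where "B = (\<lambda>c. (+) (- p c) ` interior (closure c)) ` {c\<in>C. interior (closure c) \<noteq> {}}"
  have "countable B" unfolding B_def using assms(1) by simp
  moreover have "\<forall>b\<in>B. open b \<and> 0 \<in> b"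
  proof
    fix b assume "b \<in> B"
    then obtain c where c: "interior (closure c) \<noteq> {}" "b = (+) (- p c) ` interior (closure c)"
      unfolding B_def by blast
    have "open b" using c open_ltrans by blast
    moreover have "- p c + p c \<in> b" using c p by blast
    ultimately show "open b \<and> 0 \<in> b" by simp
  qed
  moreover have "\<forall>W. nhd_of 0 W \<longrightarrow> (\<exists>b\<in>B. b \<subseteq> W)"
  proof (intro allI impI)
    fix W :: "'a set" assume "nhd_of 0 W"
    then obtain Ob where Ob: "open Ob" "0 \<in> Ob" "Ob \<subseteq> W" unfolding nhd_of_def by blast
    obtain V where V: "open V" "0 \<in> V" "\<forall>x. x \<in> V \<longleftrightarrow> -x \<in> V"
       "\<forall>a\<in>V. \<forall>b\<in>V. \<forall>c\<in>V. \<forall>d\<in>V. a + b + c + d \<in> Ob"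
      using nhds0_quad[OF Ob(1,2)] by blast
    obtain c where c: "c \<in> C" "c \<subseteq> V" "interior (closure c) \<noteq> {}"
      using H[OF nhd_ofI[OF V(1,2)]] by blast
    let ?b = "(+) (- p c) ` interior (closure c)"
    have "?b \<in> B" unfolding B_def using c by blast
    moreover have "?b \<subseteq> W"
    proof
      fix y assume "y \<in> ?b"
      then obtain q where q: "q \<in> interior (closure c)" "y = - p c + q" by blast
      have "closure c \<subseteq> closure V" using c(2) closure_mono by blast
      then have "q \<in> closure V" "p c \<in> closure V" using q(1) p[OF c(3)] interior_subset by blast+
      then obtain v1 v2 where vs1: "v1 \<in> V" "v2 \<in> V" "p c = v1 + v2"
        using closure_sub_sum[OF V(1,2)] by blast
      obtain v3 v4 where vs2: "v3 \<in> V" "v4 \<in> V" "q = v3 + v4"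
        using closure_sub_sum[OF V(1,2) \<open>q \<in> closure V\<close>] by blast
      have "y = - v2 + - v1 + v3 + v4" using q(2) vs1(3) vs2(3) by (simp add: minus_add add.assoc)
      moreover have "- v2 \<in> V" "- v1 \<in> V" using vs1 V(3) by auto
      then have "- v2 + - v1 + v3 + v4 \<in> Ob" using V(4) vs2 by blast
      ultimately have "y \<in> Ob" by simp
      then show "y \<in> W" using Ob by blast
    qed
    ultimately show "\<exists>b\<in>B. b \<subseteq> W" by blast
  qed
  ultimately show ?thesis unfolding fc0_def by blast
qed

lemma Baire_cover:
  fixes C :: "'a::topological_space set set"
  assumes "Baire_space TYPE('a)" "countable C" "open Ob" "Ob \<noteq> {}" "Ob \<subseteq> \<Union>C"
  shows "\<exists>c\<in>C. interior (closure c) \<noteq> {}"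
proof (rule ccontr)
  assume "\<not> ?thesis"
  then have e: "\<forall>c\<in>C. interior (closure c) = {}" by blast
  define G where "G = (\<lambda>c. - closure c) ` C"
  have "countable G" unfolding G_def using assms(2) by simp
  moreover have "\<forall>g\<in>G. open g \<and> closure g = UNIV"
    unfolding G_def using e by (auto simp: closure_complement)
  ultimately have "closure (\<Inter>G) = UNIV" using assms(1) unfolding Baire_space_def by blast
  then have "Ob \<inter> \<Inter>G \<noteq> {}" using open_Int_closure_eq_empty[OF assms(3), of "\<Inter>G"] assms(4) by blast
  then obtain y where y: "y \<in> Ob" "y \<in> \<Inter>G" by blast
  then obtain c where "c \<in> C" "y \<in> c" using assms(5) by blast
  moreover have "y \<notin> closure c" using y(2) \<open>c \<in> C\<close> unfolding G_def by blast
  ultimately show False using closure_subset by blast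
qed


section \<open>The four conditions imply first countability at 0\<close>

lemma pytkeev_fc0:
  assumes "Baire_space TYPE('a::{topological_group_add,t2_space})" "strong_Pytkeev TYPE('a)"
  shows "fc0 TYPE('a)"
proof -
  have "\<exists>D::'a set set. countable D \<and>
    (\<forall>U A. nhd_of 0 U \<and> 0 \<in> closure A - A \<longrightarrow> (\<exists>d\<in>D. d \<subseteq> U \<and> infinite (d \<inter> A)))"
    using assms(2) unfolding strong_Pytkeev_def by (rule spec)
  then obtain D :: "'a set set" where D: "countable D"
    "\<forall>U A. nhd_of 0 U \<and> 0 \<in> closure A - A \<longrightarrow> (\<exists>d\<in>D. d \<subseteq> U \<and> infinite (d \<inter> A))"
    by (elim exE conjE)
  show ?thesis
  proof (rule key_fc0[of "insert {0} D"])
    show "countable (insert {0} D)" using D(1) by simp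
  next
    fix W :: "'a set" assume W: "nhd_of 0 W"
    show "\<exists>c\<in>insert {0} D. c \<subseteq> W \<and> interior (closure c) \<noteq> {}"
    proof (cases "open {0::'a}")
      case True
      have "interior {0::'a} \<subseteq> interior (closure {0})" by (rule interior_mono[OF closure_subset])
      then have "0 \<in> interior (closure {0::'a})" using interior_open[OF True] by blast
      moreover have "{0} \<subseteq> W" using W unfolding nhd_of_def by blast
      ultimately show ?thesis by blast
    next
      case False
      obtain Ob where Ob: "open Ob" "0 \<in> Ob" "Ob \<subseteq> W" using W unfolding nhd_of_def by blast
      show ?thesis
      proof (rule ccontr)
        assume "\<not> ?thesis"
        then have e: "\<forall>d\<in>D. d \<subseteq> W \<longrightarrow> interior (closure d) = {}" by blast
        define D' where "D' = {d\<in>D. d \<subseteq> W}"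
        define G where "G = (\<lambda>d. - closure d) ` D'"
        have "countable G" using D(1) unfolding G_def D'_def by simp
        moreover have "\<forall>g\<in>G. open g \<and> closure g = UNIV"
          unfolding G_def D'_def using e by (auto simp: closure_complement)
        ultimately have dense: "closure (\<Inter>G) = UNIV" using assms(1) unfolding Baire_space_def by blast
        define A where "A = (Ob \<inter> \<Inter>G) - {0}"
        have "0 \<in> closure A"
        proof (rule ccontr)
          assume n0: "0 \<notin> closure A"
          define T where "T = ((- closure A) \<inter> Ob) - {0}"
          have oT: "open T" unfolding T_def using Ob(1) by (intro open_Diff open_Int closed_singleton) auto
          have "T \<noteq> {}"
          proof
            assume "T = {}"
            then have "(- closure A) \<inter> Ob = {0}" unfolding T_def using n0 Ob(2) by blast
            moreover have "open ((- closure A) \<inter> Ob)" using Ob(1) by auto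
            ultimately show False using False by metis
          qed
          then have "T \<inter> \<Inter>G \<noteq> {}" using open_Int_closure_eq_empty[OF oT, of "\<Inter>G"] dense by blast
          then obtain y where y: "y \<in> T" "y \<in> \<Inter>G" by blast
          then have "y \<in> A" unfolding A_def T_def by blast
          then show False using y(1) closure_subset unfolding T_def by blast
        qed
        moreover have "0 \<notin> A" unfolding A_def by blast
        ultimately have "nhd_of 0 W \<and> 0 \<in> closure A - A" using W by blast
        then obtain d where d: "d \<in> D" "d \<subseteq> W" "infinite (d \<inter> A)" using D(2)[rule_format, of W A] by blast
        have "- closure d \<in> G" unfolding G_def D'_def using d by blast
        then have "A \<subseteq> - closure d" unfolding A_def by blast
        then have "d \<inter> A = {}" using closure_subset by blast
        then show False using d(3) by simp
      qed
    qed
  qed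
qed

lemma cn_fc0:
  assumes "Baire_space TYPE('a::{topological_group_add,t2_space})" "countable_cn_character TYPE('a)"
  shows "fc0 TYPE('a)"
proof -
  have "\<exists>N::'a set set. countable N \<and> cn_network_at 0 N"
    using assms(2) unfolding countable_cn_character_def by (rule spec)
  then obtain N :: "'a set set" where N: "countable N" "cn_network_at 0 N" by (elim exE conjE)
  show ?thesis
  proof (rule key_fc0[OF N(1)])
    fix W :: "'a set" assume W: "nhd_of 0 W"
    define C' where "C' = {n\<in>N. 0 \<in> n \<and> n \<subseteq> W}"
    have "nhd_of 0 (\<Union>C')" unfolding C'_def using N(2)[unfolded cn_network_at_def, rule_format, OF W] .
    then obtain Ob where Ob: "open Ob" "0 \<in> Ob" "Ob \<subseteq> \<Union>C'" unfolding nhd_of_def by blast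
    have "countable C'" unfolding C'_def using N(1) by simp
    then obtain c where "c \<in> C'" "interior (closure c) \<noteq> {}"
      using Baire_cover[OF assms(1) _ Ob(1) _ Ob(3)] Ob(2) by blast
    then show "\<exists>c\<in>N. c \<subseteq> W \<and> interior (closure c) \<noteq> {}" unfolding C'_def by blast
  qed
qed

lemma ck_fc0:
  assumes "Baire_space TYPE('a::{topological_group_add,t2_space})" "countable_ck_character TYPE('a)"
  shows "fc0 TYPE('a)"
proof -
  have "\<exists>N::'a set set. countable N \<and> ck_network_at 0 N"
    using assms(2) unfolding countable_ck_character_def by (rule spec)
  then obtain N :: "'a set set" where N: "countable N" "ck_network_at 0 N" by (elim exE conjE)
  show ?thesis
  proof (rule key_fc0[OF N(1)])
    fix W :: "'a set" assume W: "nhd_of 0 W"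
    define C' where "C' = {n\<in>N. n \<subseteq> W}"
    obtain U where U: "nhd_of 0 U" "\<forall>K. compact K \<and> K \<subseteq> U \<longrightarrow>
           (\<exists>\<F>. finite \<F> \<and> \<F> \<subseteq> N \<and> 0 \<in> \<Inter>\<F> \<and> K \<subseteq> \<Union>\<F> \<and> \<Union>\<F> \<subseteq> W)"
      using N(2)[unfolded ck_network_at_def, rule_format, OF W] by (elim exE conjE)
    obtain Ob where Ob: "open Ob" "0 \<in> Ob" "Ob \<subseteq> U" using U(1) unfolding nhd_of_def by blast
    have "Ob \<subseteq> \<Union>C'"
    proof
      fix y assume "y \<in> Ob"
      then have "compact {y} \<and> {y} \<subseteq> U" using Ob(3) by auto
      then have "\<exists>F. finite F \<and> F \<subseteq> N \<and> 0 \<in> \<Inter>F \<and> {y} \<subseteq> \<Union>F \<and> \<Union>F \<subseteq> W"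
        using U(2)[rule_format, of "{y}"] by blast
      then obtain F where F: "F \<subseteq> N" "{y} \<subseteq> \<Union>F" "\<Union>F \<subseteq> W" by (elim exE conjE)
      then obtain n where "n \<in> F" "y \<in> n" by blast
      then show "y \<in> \<Union>C'" unfolding C'_def using F by blast
    qed
    have "countable C'" unfolding C'_def using N(1) by simp
    then obtain c where "c \<in> C'" "interior (closure c) \<noteq> {}"
      using Baire_cover[OF assms(1) _ Ob(1) _ \<open>Ob \<subseteq> \<Union>C'\<close>] Ob(2) by blast
    then show "\<exists>c\<in>N. c \<subseteq> W \<and> interior (closure c) \<noteq> {}" unfolding C'_def by blast
  qed
qed

lemma I_k_cong: "(\<And>i. i < k \<Longrightarrow> \<alpha> i = \<alpha>' i) \<Longrightarrow> I_k k \<alpha> = I_k k \<alpha>'"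
  unfolding I_k_def by auto

lemma D_k_sub: "D_k U k \<alpha> \<subseteq> U \<alpha>"
  unfolding D_k_def I_k_def by blast

lemma gbase_fc0:
  assumes "Baire_space TYPE('a::{topological_group_add,t2_space})"
    and "G_base (U :: (nat \<Rightarrow> nat) \<Rightarrow> 'a set)" "condition_D U"
  shows "fc0 TYPE('a)"
proof -
  define C where "C = (\<lambda>(k::nat, xs::nat list). D_k U k (\<lambda>i. if i < length xs then xs ! i else 0)) ` UNIV"
  have cC: "countable C" unfolding C_def by (intro countable_image countableI_type)
  have inC: "D_k U k \<alpha> \<in> C" for k \<alpha>
  proof -
    let ?xs = "map \<alpha> [0..<k]"
    have "I_k k \<alpha> = I_k k (\<lambda>i. if i < length ?xs then ?xs ! i else 0)"
      by (rule I_k_cong) simp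
    then have "D_k U k \<alpha> = D_k U k (\<lambda>i. if i < length ?xs then ?xs ! i else 0)"
      unfolding D_k_def by simp
    also have "\<dots> \<in> C" unfolding C_def by (rule image_eqI[where x="(k, ?xs)"]) simp_all
    finally show ?thesis .
  qed
  show ?thesis
  proof (rule key_fc0[OF cC])
    fix W :: "'a set" assume W: "nhd_of 0 W"
    obtain Ob where Ob: "open Ob" "0 \<in> Ob" "Ob \<subseteq> W" using W unfolding nhd_of_def by blast
    note Gb = assms(2)[unfolded G_base_def]
    note Gb1 = conjunct1[OF Gb] and Gb2 = conjunct1[OF conjunct2[OF Gb]]
    obtain \<alpha> where \<alpha>: "U \<alpha> \<subseteq> Ob" using Gb2[rule_format, OF nhd_ofI[OF Ob(1,2)]] by (elim exE)
    obtain O2 where O2: "open O2" "0 \<in> O2" "O2 \<subseteq> U \<alpha>"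
      using Gb1[rule_format, of \<alpha>] unfolding nhd_of_def by (elim exE conjE)
    have UD: "U \<alpha> = (\<Union>k. D_k U k \<alpha>)" using assms(3) unfolding condition_D_def by (rule spec)
    have cov: "O2 \<subseteq> \<Union>(range (\<lambda>k. D_k U k \<alpha>))" using O2(3) UD by simp
    have ne: "O2 \<noteq> {}" using O2(2) by blast
    have "countable (range (\<lambda>k. D_k U k \<alpha>))" by simp
    from Baire_cover[OF assms(1) this O2(1) ne cov]
    obtain c where c: "c \<in> range (\<lambda>k. D_k U k \<alpha>)" "interior (closure c) \<noteq> {}" by blast
    then obtain k where "c = D_k U k \<alpha>" by blast
    then have "c \<in> C" "c \<subseteq> W" using inC[of k \<alpha>] D_k_sub[of U k \<alpha>] \<alpha> Ob(3) by auto
    then show "\<exists>c\<in>C. c \<subseteq> W \<and> interior (closure c) \<noteq> {}" using c(2) by blast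
  qed
qed


section \<open>First countability at 0 implies the conditions\<close>

lemma fcx:
  assumes "fc0 TYPE('a::topological_group_add)"
  shows "\<exists>B::'a set set. countable B \<and> (\<forall>b\<in>B. open b \<and> x \<in> b) \<and> (\<forall>W. nhd_of x W \<longrightarrow> (\<exists>b\<in>B. b \<subseteq> W))"
proof -
  obtain B :: "'a set set" where B: "countable B" "\<forall>b\<in>B. open b \<and> 0 \<in> b"
    "\<forall>W. nhd_of 0 W \<longrightarrow> (\<exists>b\<in>B. b \<subseteq> W)"
    using assms unfolding fc0_def by (elim exE conjE)
  define Bx where "Bx = (\<lambda>b. (+) x ` b) ` B"
  have "countable Bx" unfolding Bx_def using B(1) by simp
  moreover have "\<forall>b\<in>Bx. open b \<and> x \<in> b"
  proof
    fix b assume "b \<in> Bx"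
    then obtain b0 where b0: "b0 \<in> B" "b = (+) x ` b0" unfolding Bx_def by blast
    have "open b0" "0 \<in> b0" using B(2) b0(1) by auto
    then have "open b" using b0(2) open_ltrans by auto
    moreover have "x + 0 \<in> b" using b0 \<open>0 \<in> b0\<close> by blast
    ultimately show "open b \<and> x \<in> b" by simp
  qed
  moreover have "\<forall>W. nhd_of x W \<longrightarrow> (\<exists>b\<in>Bx. b \<subseteq> W)"
  proof (intro allI impI)
    fix W assume "nhd_of x W"
    then obtain V where V: "open V" "x \<in> V" "V \<subseteq> W" unfolding nhd_of_def by (elim exE conjE)
    have "open ((+) (-x) ` V)" using V(1) by (rule open_ltrans)
    moreover have "0 \<in> (+) (-x) ` V" by (rule image_eqI[where x=x]) (simp_all add: V(2))
    ultimately have "nhd_of 0 ((+) (-x) ` V)" by (rule nhd_ofI)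
    then obtain b0 where b0: "b0 \<in> B" "b0 \<subseteq> (+) (-x) ` V" using B(3)[rule_format] by blast
    have "(+) x ` b0 \<subseteq> W"
    proof
      fix y assume "y \<in> (+) x ` b0"
      then obtain z where z: "z \<in> b0" "y = x + z" by blast
      then obtain v where v: "v \<in> V" "z = -x + v" using b0(2) by blast
      then have "y = v" using z(2) by (simp add: add.assoc[symmetric])
      then show "y \<in> W" using v(1) V(3) by blast
    qed
    moreover have "(+) x ` b0 \<in> Bx" unfolding Bx_def using b0(1) by blast
    ultimately show "\<exists>b\<in>Bx. b \<subseteq> W" by blast
  qed
  ultimately show ?thesis by (intro exI[of _ Bx] conjI)
qed

lemma fc0_pytkeev:
  assumes "fc0 TYPE('a::{topological_group_add,t2_space})"
  shows "strong_Pytkeev TYPE('a)"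
  unfolding strong_Pytkeev_def
proof
  fix x :: 'a
  obtain B :: "'a set set" where B: "countable B" "\<forall>b\<in>B. open b \<and> x \<in> b"
    "\<forall>W. nhd_of x W \<longrightarrow> (\<exists>b\<in>B. b \<subseteq> W)"
    using fcx[OF assms, of x] by (elim exE conjE)
  show "\<exists>D. countable D \<and> (\<forall>U A. nhd_of x U \<and> x \<in> closure A - A \<longrightarrow> (\<exists>d\<in>D. d \<subseteq> U \<and> infinite (d \<inter> A)))"
  proof (intro exI[of _ B] conjI allI impI)
    show "countable B" by (rule B(1))
    fix U A assume H: "nhd_of x U \<and> x \<in> closure A - A"
    obtain b where b: "b \<in> B" "b \<subseteq> U" using B(3)[rule_format, OF conjunct1[OF H]] by blast
    have "infinite (b \<inter> A)"
    proof
      assume fin: "finite (b \<inter> A)"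
      define T where "T = b - (b \<inter> A)"
      have ob: "open b" "x \<in> b" using B(2) b(1) by auto
      have oT: "open T" unfolding T_def using ob(1) fin by (intro open_Diff finite_imp_closed)
      have xT: "x \<in> T" unfolding T_def using ob(2) H by blast
      have "T \<inter> A = {}" unfolding T_def by blast
      then have "T \<inter> closure A = {}" using open_Int_closure_eq_empty[OF oT, of A] by blast
      then show False using xT H by blast
    qed
    then show "\<exists>d\<in>B. d \<subseteq> U \<and> infinite (d \<inter> A)" using b by blast
  qed
qed

lemma fc0_cn:
  assumes "fc0 TYPE('a::{topological_group_add,t2_space})"
  shows "countable_cn_character TYPE('a)"
  unfolding countable_cn_character_def
proof
  fix x :: 'a
  obtain B :: "'a set set" where B: "countable B" "\<forall>b\<in>B. open b \<and> x \<in> b"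
    "\<forall>W. nhd_of x W \<longrightarrow> (\<exists>b\<in>B. b \<subseteq> W)"
    using fcx[OF assms, of x] by (elim exE conjE)
  have "cn_network_at x B"
    unfolding cn_network_at_def
  proof (intro allI impI)
    fix W assume "nhd_of x W"
    then obtain b where b: "b \<in> B" "b \<subseteq> W" using B(3)[rule_format] by blast
    have ob: "open b" "x \<in> b" using B(2) b(1) by auto
    have "b \<subseteq> \<Union>{N \<in> B. x \<in> N \<and> N \<subseteq> W}" using b ob by blast
    then show "nhd_of x (\<Union>{N \<in> B. x \<in> N \<and> N \<subseteq> W})" unfolding nhd_of_def using ob by blast
  qed
  then show "\<exists>N. countable N \<and> cn_network_at x N" using B(1) by blast
qed

lemma fc0_ck:
  assumes "fc0 TYPE('a::{topological_group_add,t2_space})"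
  shows "countable_ck_character TYPE('a)"
  unfolding countable_ck_character_def
proof
  fix x :: 'a
  obtain B :: "'a set set" where B: "countable B" "\<forall>b\<in>B. open b \<and> x \<in> b"
    "\<forall>W. nhd_of x W \<longrightarrow> (\<exists>b\<in>B. b \<subseteq> W)"
    using fcx[OF assms, of x] by (elim exE conjE)
  have "ck_network_at x B"
    unfolding ck_network_at_def
  proof (intro allI impI)
    fix W assume "nhd_of x W"
    then obtain b where b: "b \<in> B" "b \<subseteq> W" using B(3)[rule_format] by blast
    have ob: "open b" "x \<in> b" using B(2) b(1) by auto
    have "\<forall>K. compact K \<and> K \<subseteq> b \<longrightarrow>
           (\<exists>\<F>. finite \<F> \<and> \<F> \<subseteq> B \<and> x \<in> \<Inter>\<F> \<and> K \<subseteq> \<Union>\<F> \<and> \<Union>\<F> \<subseteq> W)"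
    proof (intro allI impI)
      fix K assume "compact K \<and> K \<subseteq> b"
      then show "\<exists>\<F>. finite \<F> \<and> \<F> \<subseteq> B \<and> x \<in> \<Inter>\<F> \<and> K \<subseteq> \<Union>\<F> \<and> \<Union>\<F> \<subseteq> W"
        using b ob by (intro exI[of _ "{b}"]) auto
    qed
    moreover have "nhd_of x b" using ob by (rule nhd_ofI)
    ultimately show "\<exists>U. nhd_of x U \<and> (\<forall>K. compact K \<and> K \<subseteq> U \<longrightarrow>
           (\<exists>\<F>. finite \<F> \<and> \<F> \<subseteq> B \<and> x \<in> \<Inter>\<F> \<and> K \<subseteq> \<Union>\<F> \<and> \<Union>\<F> \<subseteq> W))"
      by (intro exI[of _ b] conjI)
  qed
  then show "\<exists>N. countable N \<and> ck_network_at x N" using B(1) by blast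
qed

lemma fc0_gbase:
  assumes "fc0 TYPE('a::{topological_group_add,t2_space})"
  shows "\<exists>U :: (nat \<Rightarrow> nat) \<Rightarrow> 'a set. G_base U \<and> condition_D U"
proof -
  obtain B :: "'a set set" where B: "countable B" "\<forall>b\<in>B. open b \<and> 0 \<in> b"
    "\<forall>W. nhd_of 0 W \<longrightarrow> (\<exists>b\<in>B. b \<subseteq> W)"
    using assms unfolding fc0_def by (elim exE conjE)
  have "nhd_of (0::'a) UNIV" by (rule nhd_ofI) auto
  then obtain b1 where "b1 \<in> B" using B(3)[rule_format] by blast
  then have Bne: "B \<noteq> {}" by blast
  define f where "f = from_nat_into B"
  have fB: "f n \<in> B" for n unfolding f_def using from_nat_into[OF Bne] .
  have rf: "range f = B" unfolding f_def using range_from_nat_into[OF Bne B(1)] .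
  define Bn where "Bn n = \<Inter>(f ` {..n})" for n
  have Bn_open: "open (Bn n)" for n unfolding Bn_def using fB B(2) by (intro open_INT) auto
  have Bn_0: "0 \<in> Bn n" for n unfolding Bn_def using fB B(2) by auto
  have Bn_mono: "m \<le> n \<Longrightarrow> Bn n \<subseteq> Bn m" for m n unfolding Bn_def by auto
  define U where "U \<alpha> = Bn (\<alpha> 0)" for \<alpha> :: "nat \<Rightarrow> nat"
  have "G_base U"
    unfolding G_base_def
  proof (intro conjI allI impI)
    fix \<alpha> :: "nat \<Rightarrow> nat"
    show "nhd_of 0 (U \<alpha>)" unfolding U_def using Bn_open Bn_0 by (rule nhd_ofI)
  next
    fix V :: "'a set" assume "nhd_of 0 V"
    then obtain b where b: "b \<in> B" "b \<subseteq> V" using B(3)[rule_format] by blast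
    then obtain m where "b = f m" using rf by blast
    then have "U (\<lambda>_. m) \<subseteq> V" unfolding U_def Bn_def using b(2) by auto
    then show "\<exists>\<alpha>. U \<alpha> \<subseteq> V" by blast
  next
    fix \<alpha> \<beta> :: "nat \<Rightarrow> nat" assume "\<alpha> \<le> \<beta>"
    then have "\<alpha> 0 \<le> \<beta> 0" by (simp add: le_fun_def)
    then show "U \<beta> \<subseteq> U \<alpha>" unfolding U_def by (rule Bn_mono)
  qed
  moreover have "condition_D U"
    unfolding condition_D_def
  proof
    fix \<alpha> :: "nat \<Rightarrow> nat"
    have "D_k U k \<alpha> \<subseteq> U \<alpha>" for k by (rule D_k_sub)
    moreover have "U \<alpha> \<subseteq> D_k U 1 \<alpha>" unfolding D_k_def I_k_def U_def by auto
    ultimately show "U \<alpha> = (\<Union>k. D_k U k \<alpha>)" by blast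
  qed
  ultimately show ?thesis by blast
qed

lemma metrizable_fc0:
  assumes "metrizable_space (euclidean :: 'a::topological_group_add topology)"
  shows "fc0 TYPE('a)"
proof -
  have "first_countable (euclidean :: 'a topology)" using assms by (rule metrizable_imp_first_countable)
  then have "\<exists>\<B>. countable \<B> \<and> (\<forall>V \<in> \<B>. openin euclidean V) \<and>
             (\<forall>U. openin euclidean U \<and> (0::'a) \<in> U \<longrightarrow> (\<exists>V \<in> \<B>. 0 \<in> V \<and> V \<subseteq> U))"
    unfolding first_countable_def by simp
  then obtain B :: "'a set set" where B: "countable B" "\<forall>V \<in> B. open V"
     "\<forall>U. open U \<and> (0::'a) \<in> U \<longrightarrow> (\<exists>V \<in> B. 0 \<in> V \<and> V \<subseteq> U)" by auto
  define B' where "B' = {V\<in>B. 0 \<in> V}"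
  have "countable B'" unfolding B'_def using B(1) by simp
  moreover have "\<forall>b\<in>B'. open b \<and> 0 \<in> b" unfolding B'_def using B(2) by blast
  moreover have "\<forall>W. nhd_of 0 W \<longrightarrow> (\<exists>b\<in>B'. b \<subseteq> W)"
  proof (intro allI impI)
    fix W :: "'a set" assume "nhd_of 0 W"
    then obtain V where V: "open V" "0 \<in> V" "V \<subseteq> W" unfolding nhd_of_def by (elim exE conjE)
    then obtain b where "b \<in> B" "0 \<in> b" "b \<subseteq> V" using B(3)[rule_format, of V] by blast
    then show "\<exists>b\<in>B'. b \<subseteq> W" unfolding B'_def using V(3) by blast
  qed
  ultimately show ?thesis unfolding fc0_def by blast
qed



section \<open>Birkhoff--Kakutani: first countable groups are metrizable\<close>

lemma sum_list_rev_neg: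
  fixes zs :: "'a::group_add list"
  shows "sum_list (rev (map uminus zs)) = - sum_list zs"
  by (induction zs) (simp_all add: minus_add)

locale bk =
  fixes V :: "nat \<Rightarrow> 'a::{topological_group_add,t2_space} set"
  assumes V0: "V 0 = UNIV"
    and Vopen: "open (V n)"
    and Vzero: "0 \<in> V n"
    and Vsym: "x \<in> V n \<longleftrightarrow> -x \<in> V n"
    and Vtri: "x \<in> V (Suc n) \<Longrightarrow> y \<in> V (Suc n) \<Longrightarrow> z \<in> V (Suc n) \<Longrightarrow> x + y + z \<in> V n"
    and Vbase: "nhd_of 0 W \<Longrightarrow> \<exists>n. V n \<subseteq> W"
begin

lemma Vdec: "V (Suc n) \<subseteq> V n"
proof
  fix x assume "x \<in> V (Suc n)"
  then have "x + 0 + 0 \<in> V n" using Vtri Vzero by blast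
  then show "x \<in> V n" by simp
qed

lemma Vmono: "m \<le> n \<Longrightarrow> V n \<subseteq> V m"
  by (rule lift_Suc_antimono_le[of V, OF Vdec])

lemma Vall0:
  assumes a: "\<forall>n. z \<in> V n" shows "z = 0"
proof (rule ccontr)
  assume "z \<noteq> 0"
  then obtain T where T: "open T" "0 \<in> T" "z \<notin> T" using t1_space[of 0 z] by auto
  then obtain n where "V n \<subseteq> T" using Vbase[OF nhd_ofI[OF T(1,2)]] by blast
  then show False using a T(3) by blast
qed

definition lev :: "'a \<Rightarrow> nat" where "lev z = (LEAST n. z \<notin> V (Suc n))"
definition g :: "'a \<Rightarrow> real" where "g z = (if \<forall>n. z \<in> V n then 0 else (1/2)^lev z)"

lemma lev_props:
  assumes "\<not>(\<forall>n. z \<in> V n)"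
  shows "z \<notin> V (Suc (lev z))" "\<And>m. m < lev z \<Longrightarrow> z \<in> V (Suc m)"
proof -
  obtain n where n: "z \<notin> V n" using assms by blast
  then have "n \<noteq> 0" using V0 by (metis UNIV_I)
  then obtain m where "z \<notin> V (Suc m)" using n by (cases n) auto
  then show "z \<notin> V (Suc (lev z))" unfolding lev_def by (rule LeastI)
  show "\<And>m. m < lev z \<Longrightarrow> z \<in> V (Suc m)" unfolding lev_def using not_less_Least by blast
qed

lemma in_V_iff:
  assumes F: "\<not>(\<forall>n. z \<in> V n)" shows "z \<in> V q \<longleftrightarrow> q \<le> lev z"
proof
  assume zq: "z \<in> V q"
  show "q \<le> lev z"
  proof (rule ccontr)
    assume "\<not> q \<le> lev z"
    then have "Suc (lev z) \<le> q" by simp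
    then have "V q \<subseteq> V (Suc (lev z))" by (rule Vmono)
    then show False using zq lev_props(1)[OF F] by blast
  qed
next
  assume ql: "q \<le> lev z"
  show "z \<in> V q"
  proof (cases q)
    case 0 then show ?thesis using V0 by simp
  next
    case (Suc m)
    then have "m < lev z" using ql by simp
    then show ?thesis using lev_props(2)[OF F] Suc by simp
  qed
qed

lemma g_le_iff: "g z \<le> (1/2)^q \<longleftrightarrow> z \<in> V q"
proof (cases "\<forall>n. z \<in> V n")
  case True then show ?thesis unfolding g_def by simp
next
  case False
  have gz: "g z = (1/2)^lev z" using False unfolding g_def by (rule if_not_P)
  have "g z \<le> (1/2)^q \<longleftrightarrow> (1/2::real)^lev z \<le> (1/2)^q" unfolding gz ..
  also have "\<dots> \<longleftrightarrow> q \<le> lev z" by (rule power_decreasing_iff) auto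
  also have "\<dots> \<longleftrightarrow> z \<in> V q" using in_V_iff[OF False] by simp
  finally show ?thesis .
qed

lemma g_nonneg: "0 \<le> g z" unfolding g_def by simp

lemma g_le1: "g z \<le> 1" using g_le_iff[of z 0] V0 by simp

lemma g_zero: "g 0 = 0" unfolding g_def using Vzero by simp

lemma g_minus: "g (-z) = g z"
proof -
  have s: "(-z \<in> V n) \<longleftrightarrow> (z \<in> V n)" for n using Vsym[of "-z" n] by simp
  have a: "(\<forall>n. -z \<in> V n) \<longleftrightarrow> (\<forall>n. z \<in> V n)" using s by blast
  have b: "lev (-z) = lev z" unfolding lev_def using s by simp
  show ?thesis unfolding g_def using a b by simp
qed

lemma g_notin: "z \<notin> V (Suc q) \<Longrightarrow> (1/2)^q \<le> g z"
proof -
  assume a: "z \<notin> V (Suc q)"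
  then have F: "\<not>(\<forall>n. z \<in> V n)" by blast
  then have "lev z \<le> q" using in_V_iff[OF F, of "Suc q"] a by simp
  then have "(1/2::real)^q \<le> (1/2)^lev z" by (rule power_decreasing) auto
  moreover have "g z = (1/2)^lev z" using F unfolding g_def by (rule if_not_P)
  ultimately show ?thesis by simp
qed

lemma g_small_in: "g x \<le> s \<Longrightarrow> s < (1/2)^q \<Longrightarrow> x \<in> V (Suc q)"
proof (rule ccontr)
  assume "g x \<le> s" "s < (1/2)^q" "x \<notin> V (Suc q)"
  then have "(1/2)^q \<le> g x" using g_notin by blast
  then show False using \<open>g x \<le> s\<close> \<open>s < (1/2)^q\<close> by linarith
qed

lemma triple_g:
  assumes gx: "g x \<le> s" and gy: "g y \<le> s" and gw: "g w \<le> s" and s1: "s < 1"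
  shows "g (x + y + w) \<le> 2 * s"
proof (cases "s \<le> 0")
  case True
  have "g x = 0" "g y = 0" "g w = 0" using g_nonneg[of x] g_nonneg[of y] g_nonneg[of w] gx gy gw True
    by linarith+
  then have "x \<in> V n" "y \<in> V n" "w \<in> V n" for n
    using g_le_iff[of x n] g_le_iff[of y n] g_le_iff[of w n] by simp_all
  then have "x + y + w \<in> V n" for n using Vtri by blast
  then have "g (x + y + w) = 0" unfolding g_def by simp
  moreover have "0 \<le> s" using g_nonneg[of x] gx by linarith
  ultimately show ?thesis by simp
next
  case False
  then have s0: "0 < s" by simp
  obtain n where n: "(1/2::real)^n < s" using real_arch_pow_inv[OF s0, of "1/2"] by auto
  define P where "P = (LEAST p. (1/2::real)^p \<le> s)"
  have P1: "(1/2::real)^P \<le> s" unfolding P_def by (rule LeastI[of _ n]) (use n in simp)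
  have "P \<noteq> 0" using P1 s1 by (cases P) auto
  then obtain q where q: "P = Suc q" by (cases P) auto
  have "\<not> (1/2::real)^q \<le> s" using not_less_Least[of q "\<lambda>p. (1/2::real)^p \<le> s"] q unfolding P_def by simp
  then have lt: "s < (1/2)^q" by simp
  have "x \<in> V (Suc q)" "y \<in> V (Suc q)" "w \<in> V (Suc q)"
    using g_small_in[OF gx lt] g_small_in[OF gy lt] g_small_in[OF gw lt] .
  then have "x + y + w \<in> V q" by (rule Vtri)
  then have "g (x + y + w) \<le> (1/2)^q" using g_le_iff by blast
  also have "\<dots> = 2 * (1/2)^P" using q by simp
  also have "\<dots> \<le> 2 * s" using P1 by simp
  finally show ?thesis .
qed

lemma sum_g_nonneg: "0 \<le> sum_list (map g zs)"
  by (rule sum_list_nonneg) (auto simp: g_nonneg)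

lemma chain: "g (sum_list zs) \<le> 2 * sum_list (map g zs)"
proof (induction "length zs" arbitrary: zs rule: less_induct)
  case less
  define S where "S = sum_list (map g zs)"
  have S0: "0 \<le> S" unfolding S_def by (rule sum_g_nonneg)
  show ?case
  proof (cases "1/2 \<le> S")
    case True then show ?thesis using g_le1[of "sum_list zs"] unfolding S_def by linarith
  next
    case False
    show ?thesis
    proof (cases "zs = []")
      case True then show ?thesis by (simp add: g_zero)
    next
      case nonempty: False
      define P where "P j \<longleftrightarrow> j < length zs \<and> sum_list (map g (take j zs)) \<le> S/2" for j
      have P0: "P 0" unfolding P_def using nonempty S0 by simp
      have Pb: "\<And>y. P y \<Longrightarrow> y \<le> length zs" unfolding P_def by simp
      define J where "J = Greatest P"
      have PJ: "P J" unfolding J_def by (rule GreatestI_nat[of P 0 "length zs", OF P0 Pb])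
      have Jmax: "P j \<Longrightarrow> j \<le> J" for j unfolding J_def by (rule Greatest_le_nat[of P j "length zs", OF _ Pb])
      have J_lt: "J < length zs" using PJ unfolding P_def by simp
      define a where "a = take J zs"
      define c where "c = zs ! J"
      define r where "r = drop (Suc J) zs"
      have zs_eq: "zs = a @ c # r" unfolding a_def c_def r_def by (rule id_take_nth_drop[OF J_lt])
      define Sa where "Sa = sum_list (map g a)"
      define Sr where "Sr = sum_list (map g r)"
      have "map g zs = map g a @ g c # map g r" by (subst zs_eq) simp
      then have S_eq: "S = Sa + g c + Sr" unfolding S_def Sa_def Sr_def by simp
      have Sa_le: "Sa \<le> S/2" using PJ unfolding P_def Sa_def a_def by simp
      have Sa0: "0 \<le> Sa" "0 \<le> Sr" unfolding Sa_def Sr_def by (rule sum_g_nonneg)+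
      have Sr_le: "Sr \<le> S/2"
      proof (cases "Suc J < length zs")
        case True
        have "\<not> P (Suc J)" using Jmax by fastforce
        then have "S/2 < sum_list (map g (take (Suc J) zs))" using True unfolding P_def by simp
        also have "take (Suc J) zs = a @ [c]"
          unfolding a_def c_def by (rule take_Suc_conv_app_nth[OF J_lt])
        finally have "S/2 < Sa + g c" unfolding Sa_def by simp
        then show ?thesis using S_eq by linarith
      next
        case False
        then have "r = []" unfolding r_def by simp
        then show ?thesis unfolding Sr_def using S0 by simp
      qed
      have la: "length a < length zs" unfolding a_def using J_lt by simp
      have lr: "length r < length zs" unfolding r_def using J_lt by simp
      have ga: "g (sum_list a) \<le> S" using less.hyps[OF la] Sa_le unfolding Sa_def by linarith
      have gr: "g (sum_list r) \<le> S" using less.hyps[OF lr] Sr_le unfolding Sr_def by linarith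
      have gc: "g c \<le> S" using S_eq Sa0 by linarith
      have "g (sum_list a + c + sum_list r) \<le> 2 * S"
        by (rule triple_g[OF ga gc gr]) (use False in linarith)
      moreover have "sum_list zs = sum_list a + c + sum_list r" by (subst zs_eq) (simp add: add.assoc)
      ultimately show ?thesis unfolding S_def by simp
    qed
  qed
qed

definition pn :: "'a \<Rightarrow> real" where
  "pn z = Inf {sum_list (map g zs) | zs. sum_list zs = z}"

lemma pn_le: "sum_list zs = z \<Longrightarrow> pn z \<le> sum_list (map g zs)"
  unfolding pn_def
proof (rule cInf_lower)
  assume "sum_list zs = z"
  then show "sum_list (map g zs) \<in> {sum_list (map g zs) | zs. sum_list zs = z}" by blast
  show "bdd_below {sum_list (map g zs) | zs. sum_list zs = z}"
    by (rule bdd_belowI[of _ 0]) (auto simp: sum_g_nonneg)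
qed

lemma pn_ge: "(\<And>zs. sum_list zs = z \<Longrightarrow> c \<le> sum_list (map g zs)) \<Longrightarrow> c \<le> pn z"
  unfolding pn_def
proof (rule cInf_greatest)
  show "{sum_list (map g zs) | zs. sum_list zs = z} \<noteq> {}"
  proof -
    have "sum_list [z] = z" by simp
    then have "sum_list (map g [z]) \<in> {sum_list (map g zs) | zs. sum_list zs = z}" by blast
    then show ?thesis by blast
  qed
qed auto

lemma pn_g: "g z \<le> 2 * pn z"
proof -
  have "g z / 2 \<le> pn z"
  proof (rule pn_ge)
    fix zs assume "sum_list zs = z"
    then show "g z / 2 \<le> sum_list (map g zs)" using chain[of zs] by simp
  qed
  then show ?thesis by simp
qed

lemma pn_le_g: "pn z \<le> g z"
  using pn_le[of "[z]" z] by simp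

lemma pn_nonneg: "0 \<le> pn z"
  by (rule pn_ge) (rule sum_g_nonneg)

lemma pn_add: "pn (x + y) \<le> pn x + pn y"
proof -
  have "pn (x + y) - pn y \<le> pn x"
  proof (rule pn_ge)
    fix xs assume xs: "sum_list xs = x"
    have "pn (x + y) - sum_list (map g xs) \<le> pn y"
    proof (rule pn_ge)
      fix ys assume ys: "sum_list ys = y"
      have "pn (x + y) \<le> sum_list (map g (xs @ ys))" using pn_le[of "xs @ ys" "x + y"] xs ys by simp
      then show "pn (x + y) - sum_list (map g xs) \<le> sum_list (map g ys)" by simp
    qed
    then show "pn (x + y) - pn y \<le> sum_list (map g xs)" by simp
  qed
  then show ?thesis by simp
qed

lemma pn_minus_le: "pn (-z) \<le> pn z"
proof (rule pn_ge)
  fix zs assume zs: "sum_list zs = z"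
  have "pn (-z) \<le> sum_list (map g (rev (map uminus zs)))"
    by (rule pn_le) (simp add: sum_list_rev_neg zs)
  also have "\<dots> = sum_list (map g zs)"
    by (simp add: rev_map[symmetric] sum_list_rev g_minus comp_def)
  finally show "pn (-z) \<le> sum_list (map g zs)" .
qed

lemma pn_minus: "pn (-z) = pn z"
  using pn_minus_le[of z] pn_minus_le[of "-z"] by simp

definition dd :: "'a \<Rightarrow> 'a \<Rightarrow> real" where "dd x y = pn (-x + y)"

lemma dd_metric: "Metric_space UNIV dd"
  unfolding Metric_space_def
proof (intro conjI allI impI)
  fix x y z :: 'a
  show "0 \<le> dd x y" unfolding dd_def by (rule pn_nonneg)
  have "- y + x = - (- x + y)" by (simp add: minus_add)
  then show "dd x y = dd y x" unfolding dd_def using pn_minus by metis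
  show "dd x y = 0 \<longleftrightarrow> x = y"
  proof
    assume "dd x y = 0"
    then have "g (-x + y) \<le> 0" using pn_g[of "-x + y"] unfolding dd_def by simp
    then have "g (-x + y) \<le> (1/2)^n" for n
    proof -
      assume "g (-x + y) \<le> 0"
      moreover have "(0::real) \<le> (1/2)^n" by simp
      ultimately show ?thesis by linarith
    qed
    then have "-x + y \<in> V n" for n using g_le_iff[of "-x + y" n] by blast
    then have "-x + y = 0" using Vall0 by blast
    then have "x + (-x + y) = x" by simp
    then show "x = y" by (simp add: add.assoc[symmetric])
  next
    assume "x = y"
    then show "dd x y = 0" unfolding dd_def using pn_le_g[of 0] pn_nonneg[of 0] g_zero by simp
  qed
  have "- x + z = (- x + y) + (- y + z)" by (simp add: add.assoc[symmetric])
  then show "dd x z \<le> dd x y + dd y z" unfolding dd_def using pn_add[of "- x + y" "- y + z"] by metis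
qed

lemma ball1: "dd x y < (1/2)^(Suc n) \<Longrightarrow> -x + y \<in> V n"
proof -
  assume "dd x y < (1/2)^(Suc n)"
  then have "g (-x + y) < (1/2)^n" using pn_g[of "-x + y"] unfolding dd_def by simp
  then show ?thesis using g_le_iff[of "-x + y" n] by simp
qed

lemma ball2: "-x + y \<in> V (Suc n) \<Longrightarrow> dd x y < (1/2)^n"
proof -
  assume "-x + y \<in> V (Suc n)"
  then have "g (-x + y) \<le> (1/2)^(Suc n)" using g_le_iff by blast
  then have "dd x y \<le> (1/2)^(Suc n)" unfolding dd_def using pn_le_g[of "-x + y"] by linarith
  moreover have "(1/2::real)^(Suc n) < (1/2)^n" by simp
  ultimately show ?thesis by linarith
qed

lemma metrizable: "metrizable_space (euclidean :: 'a topology)"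
proof -
  interpret M: Metric_space UNIV dd by (rule dd_metric)
  have "M.mtopology = euclidean"
  proof (rule topology_eq[THEN iffD2], intro allI)
    fix S :: "'a set"
    show "openin M.mtopology S \<longleftrightarrow> openin euclidean S"
    proof
      assume "openin M.mtopology S"
      then have H: "\<forall>x. x \<in> S \<longrightarrow> (\<exists>r>0. M.mball x r \<subseteq> S)" unfolding M.openin_mtopology by (elim conjE)
      have "open S"
      proof (rule open_subopen[THEN iffD2], intro ballI)
        fix x assume "x \<in> S"
        then obtain r where r: "r > 0" "M.mball x r \<subseteq> S" using H by blast
        obtain n where n: "(1/2::real)^n < r" using real_arch_pow_inv[OF r(1), of "1/2"] by auto
        define T where "T = (+) x ` V (Suc n)"
        have "open T" unfolding T_def using Vopen by (rule open_ltrans)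
        moreover have "x \<in> T" unfolding T_def using Vzero by (rule image_eqI[where x=0, rotated]) simp
        moreover have "T \<subseteq> S"
        proof
          fix y assume "y \<in> T"
          then obtain v where v: "v \<in> V (Suc n)" "y = x + v" unfolding T_def by blast
          then have "-x + y = v" by (simp add: add.assoc[symmetric])
          then have "dd x y < r" using ball2[of x y n] v(1) n by simp
          then show "y \<in> S" using r(2) by auto
        qed
        ultimately show "\<exists>T. open T \<and> x \<in> T \<and> T \<subseteq> S" by blast
      qed
      then show "openin euclidean S" by simp
    next
      assume "openin euclidean S"
      then have oS: "open S" by simp
      show "openin M.mtopology S"
        unfolding M.openin_mtopology
      proof (intro conjI allI impI)
        show "S \<subseteq> UNIV" by simp
        fix x assume "x \<in> S"
        define W where "W = (+) (-x) ` S"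
        have "open W" unfolding W_def using oS by (rule open_ltrans)
        moreover have "0 \<in> W" unfolding W_def by (rule image_eqI[where x=x]) (simp_all add: \<open>x \<in> S\<close>)
        ultimately obtain n where n: "V n \<subseteq> W" using Vbase[OF nhd_ofI] by blast
        have "M.mball x ((1/2)^(Suc n)) \<subseteq> S"
        proof
          fix y assume "y \<in> M.mball x ((1/2)^(Suc n))"
          then have "dd x y < (1/2)^(Suc n)" by simp
          then have "-x + y \<in> W" using ball1 n by blast
          then obtain s where s: "s \<in> S" "-x + y = -x + s" unfolding W_def by blast
          then have "y = s" by simp
          then show "y \<in> S" using s(1) by simp
        qed
        then show "\<exists>r>0. M.mball x r \<subseteq> S" by (intro exI[of _ "(1/2)^(Suc n)"]) simp
      qed
    qed
  qed
  then have "euclidean = Metric_space.mtopology UNIV dd" by simp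
  then show ?thesis unfolding metrizable_space_def using dd_metric by blast
qed

end

definition nxt :: "'a::topological_group_add set \<Rightarrow> 'a set \<Rightarrow> 'a set" where
  "nxt W0 B = (SOME W. open W \<and> 0 \<in> W \<and> (\<forall>x. x \<in> W \<longleftrightarrow> -x \<in> W) \<and>
                     (\<forall>x\<in>W. \<forall>y\<in>W. \<forall>z\<in>W. x + y + z \<in> W0 \<inter> B))"

primrec VV :: "(nat \<Rightarrow> 'a::topological_group_add set) \<Rightarrow> nat \<Rightarrow> 'a set" where
  "VV b 0 = UNIV"
| "VV b (Suc n) = nxt (VV b n) (b n)"

lemma VV_step:
  assumes "open (VV b n)" "0 \<in> VV b n" "open (b n)" "0 \<in> b n"
  shows "open (VV b (Suc n)) \<and> 0 \<in> VV b (Suc n) \<and> (\<forall>x. x \<in> VV b (Suc n) \<longleftrightarrow> -x \<in> VV b (Suc n)) \<and>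
         (\<forall>x\<in>VV b (Suc n). \<forall>y\<in>VV b (Suc n). \<forall>z\<in>VV b (Suc n). x + y + z \<in> VV b n \<inter> b n)"
proof -
  have h: "open (VV b n \<inter> b n)" "0 \<in> VV b n \<inter> b n" using assms by auto
  define P where "P W \<longleftrightarrow> open W \<and> 0 \<in> W \<and> (\<forall>x. x \<in> W \<longleftrightarrow> -x \<in> W) \<and>
                     (\<forall>x\<in>W. \<forall>y\<in>W. \<forall>z\<in>W. x + y + z \<in> VV b n \<inter> b n)" for W
  have "\<exists>W. P W" unfolding P_def by (rule nhds0_triple[OF h])
  then have PS: "P (SOME W. P W)" by (rule someI_ex)
  have eq: "VV b (Suc n) = (SOME W. P W)" unfolding P_def VV.simps(2) nxt_def ..
  from PS have "P (VV b (Suc n))" unfolding eq .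
  then show ?thesis unfolding P_def .
qed

lemma VV_basic:
  assumes "\<And>n. open (b n) \<and> 0 \<in> b n"
  shows "open (VV b n) \<and> 0 \<in> VV b n \<and> (\<forall>x. x \<in> VV b n \<longleftrightarrow> -x \<in> VV b n)"
proof (induction n)
  case 0 then show ?case by simp
next
  case (Suc n)
  have hb: "open (b n) \<and> 0 \<in> b n" by (rule assms)
  have "open (VV b (Suc n)) \<and> 0 \<in> VV b (Suc n) \<and> (\<forall>x. x \<in> VV b (Suc n) \<longleftrightarrow> -x \<in> VV b (Suc n)) \<and>
         (\<forall>x\<in>VV b (Suc n). \<forall>y\<in>VV b (Suc n). \<forall>z\<in>VV b (Suc n). x + y + z \<in> VV b n \<inter> b n)"
    by (rule VV_step[OF conjunct1[OF Suc] conjunct1[OF conjunct2[OF Suc]] conjunct1[OF hb] conjunct2[OF hb]])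
  then show ?case by (elim conjE) (intro conjI)
qed

lemma VV_tri:
  assumes "\<And>n. open (b n) \<and> 0 \<in> b n"
  shows "\<forall>x\<in>VV b (Suc n). \<forall>y\<in>VV b (Suc n). \<forall>z\<in>VV b (Suc n). x + y + z \<in> VV b n \<inter> b n"
proof -
  have hb: "open (b n) \<and> 0 \<in> b n" by (rule assms)
  have h: "open (VV b n) \<and> 0 \<in> VV b n \<and> (\<forall>x. x \<in> VV b n \<longleftrightarrow> -x \<in> VV b n)"
    by (rule VV_basic[OF assms])
  have "open (VV b (Suc n)) \<and> 0 \<in> VV b (Suc n) \<and> (\<forall>x. x \<in> VV b (Suc n) \<longleftrightarrow> -x \<in> VV b (Suc n)) \<and>
         (\<forall>x\<in>VV b (Suc n). \<forall>y\<in>VV b (Suc n). \<forall>z\<in>VV b (Suc n). x + y + z \<in> VV b n \<inter> b n)"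
    by (rule VV_step[OF conjunct1[OF h] conjunct1[OF conjunct2[OF h]] conjunct1[OF hb] conjunct2[OF hb]])
  then show ?thesis by (elim conjE)
qed

lemma fc0_metrizable:
  assumes "fc0 TYPE('a::{topological_group_add,t2_space})"
  shows "metrizable_space (euclidean :: 'a topology)"
proof -
  obtain B :: "'a set set" where B: "countable B" "\<forall>b\<in>B. open b \<and> 0 \<in> b"
    "\<forall>W. nhd_of 0 W \<longrightarrow> (\<exists>b\<in>B. b \<subseteq> W)"
    using assms unfolding fc0_def by (elim exE conjE)
  have "nhd_of (0::'a) UNIV" by (rule nhd_ofI) auto
  then obtain b1 where "b1 \<in> B" using B(3)[rule_format] by blast
  then have Bne: "B \<noteq> {}" by blast
  define f where "f = from_nat_into B"
  have fB: "f n \<in> B" for n unfolding f_def using from_nat_into[OF Bne] .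
  have rf: "range f = B" unfolding f_def using range_from_nat_into[OF Bne B(1)] .
  have fo: "\<And>n. open (f n) \<and> 0 \<in> f n" using fB B(2) by blast
  interpret bk "VV f"
  proof
    show "VV f 0 = UNIV" by simp
    fix n :: nat
    note h = VV_basic[where b=f and n=n, OF fo]
    show "open (VV f n)" by (rule conjunct1[OF h])
    show "0 \<in> VV f n" by (rule conjunct1[OF conjunct2[OF h]])
    fix x :: 'a
    show "x \<in> VV f n \<longleftrightarrow> -x \<in> VV f n" by (rule spec[OF conjunct2[OF conjunct2[OF h]]])
  next
    fix x y z :: 'a and n
    assume "x \<in> VV f (Suc n)" "y \<in> VV f (Suc n)" "z \<in> VV f (Suc n)"
    then show "x + y + z \<in> VV f n" using VV_tri[where b=f and n=n, OF fo] by blast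
  next
    fix W :: "'a set" assume "nhd_of 0 W"
    then obtain b where b: "b \<in> B" "b \<subseteq> W" using B(3)[rule_format] by blast
    have "b \<in> range f" using b(1) rf by simp
    then obtain m where m: "b = f m" by (rule rangeE)
    have "VV f (Suc m) \<subseteq> W"
    proof
      fix x assume x: "x \<in> VV f (Suc m)"
      have "0 \<in> VV f (Suc m)" by (rule conjunct1[OF conjunct2[OF VV_basic[where b=f and n="Suc m", OF fo]]])
      then have "x + 0 + 0 \<in> VV f m \<inter> f m" using VV_tri[where b=f and n=m, OF fo] x by blast
      then show "x \<in> W" using b m by auto
    qed
    then show "\<exists>n. VV f n \<subseteq> W" by blast
  qed
  show ?thesis by (rule metrizable)
qed

theorem mainTheorem4:
  assumes "Baire_space TYPE('a::{topological_group_add, t2_space})"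
  shows "(metrizable_space (euclidean :: 'a topology) \<longleftrightarrow> strong_Pytkeev TYPE('a))
       \<and> (strong_Pytkeev TYPE('a) \<longleftrightarrow> countable_ck_character TYPE('a))
       \<and> (countable_ck_character TYPE('a) \<longleftrightarrow> countable_cn_character TYPE('a))
       \<and> (countable_cn_character TYPE('a) \<longleftrightarrow>
            (\<exists>U :: (nat \<Rightarrow> nat) \<Rightarrow> 'a set. G_base U \<and> condition_D U))"
proof -
  have m: "metrizable_space (euclidean :: 'a topology) \<longleftrightarrow> fc0 TYPE('a)"
    using metrizable_fc0 fc0_metrizable by blast
  have p: "strong_Pytkeev TYPE('a) \<longleftrightarrow> fc0 TYPE('a)"
    using pytkeev_fc0[OF assms] fc0_pytkeev by blast
  have k: "countable_ck_character TYPE('a) \<longleftrightarrow> fc0 TYPE('a)"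
    using ck_fc0[OF assms] fc0_ck by blast
  have n: "countable_cn_character TYPE('a) \<longleftrightarrow> fc0 TYPE('a)"
    using cn_fc0[OF assms] fc0_cn by blast
  have g: "(\<exists>U :: (nat \<Rightarrow> nat) \<Rightarrow> 'a set. G_base U \<and> condition_D U) \<longleftrightarrow> fc0 TYPE('a)"
    using gbase_fc0[OF assms] fc0_gbase by blast
  show ?thesis using m p k n g by simp
qed

end
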